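(* Let $0<q,r<\infty$ and let $u,v,w$ be weights on $(0,\infty)$. Let $\{x_k\}$ be the covering sequence associated with $u$ and $\mathcal Z$ its index set (as described in the context). Then $$\bigg( \int_0^{\infty} \bigg( \int_x^{\infty} \bigg( \int_t^{\infty} h \bigg)^q w(t)\,dt\bigg)^{r / q} u(x)\,dx \bigg)^{1/r} \approx \bigg\| \bigg\{ 2^{k / r} \bigg(\int_{x_k}^{x_{k+1}} \bigg( \int_s^{x_{k+1}} h \bigg)^q w(s)\,ds\bigg)^{ 1 / q}\bigg\} \bigg\|_{\ell^r(\mathcal Z)} + \bigg\| \bigg\{ 2^{k / r} \bigg(\int_{x_k}^{x_{k+1}} w \bigg)^{1 / q} \bigg( \int_{x_{k+1}}^{\infty} h\bigg)\bigg\} \bigg\|_{\ell^r(\mathcal Z)}$$ with constants independent of $h\in\mathfrak M^+(0,\infty)$.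
   Context: $\mathfrak M^+(0,\infty)$: non-negative measurable functions on $(0,\infty)$. A weight is $v\in\mathfrak M^+(0,\infty)$ with $0<\int_0^x v<\infty$ for all $x>0$. Covering sequence: if $\int_0^\infty u=\infty$, $\{x_k\}_{k\in\mathbb Z}$ is the strictly increasing sequence with $\int_0^{x_k}u=2^k$, and $\mathcal Z=\mathbb Z$. If $\int_0^\infty u<\infty$, let $M\in\mathbb Z$ satisfy $2^M\le\int_0^\infty u<2^{M+1}$, let $\int_0^{x_k}u=2^k$ for $k\le M$, $x_{M+1}=\infty$, and $\mathcal Z=\{k\in\mathbb Z: k\le M\}$. For a sequence $\{a_k\}_{k\in\mathcal Z}$, $\|\{a_k\}\|_{\ell^r(\mathcal Z)}=(\sum_{k\in\mathcal Z}|a_k|^r)^{1/r}$. $A\approx B$ means two-sided inequality with constants depending only on $q,r$. *)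

theory Defs
  imports "HOL-Analysis.Analysis"
begin

definition epow :: "ennreal \<Rightarrow> real \<Rightarrow> ennreal" where
  "epow x p = (if x = top then top else ennreal (enn2real x powr p))"

definition nonneg_meas :: "(real \<Rightarrow> real) \<Rightarrow> bool" where
  "nonneg_meas f \<longleftrightarrow> f \<in> borel_measurable borel \<and> (\<forall>x>0. 0 \<le> f x)"

definition is_weight :: "(real \<Rightarrow> real) \<Rightarrow> bool" where
  "is_weight v \<longleftrightarrow> nonneg_meas v \<and>
     (\<forall>x>0. 0 < (\<integral>\<^sup>+ t\<in>{0<..x}. ennreal (v t) \<partial>lborel)
           \<and> (\<integral>\<^sup>+ t\<in>{0<..x}. ennreal (v t) \<partial>lborel) < \<infinity>)"

(* Covering sequence xs with index set Z associated with u.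
  Points are extended reals so that xM+1 =  in the finite case. *)
definition covering_seq :: "(real \<Rightarrow> real) \<Rightarrow> int set \<Rightarrow> (int \<Rightarrow> ereal) \<Rightarrow> bool" where
  "covering_seq u Z xs \<longleftrightarrow>
    (if (\<integral>\<^sup>+ t\<in>{0<..}. ennreal (u t) \<partial>lborel) = \<infinity> then
       Z = UNIV \<and> strict_mono xs \<and>
       (\<forall>k. \<exists>y>0. xs k = ereal y \<and>
            (\<integral>\<^sup>+ t\<in>{0<..y}. ennreal (u t) \<partial>lborel) = ennreal (2 powr real_of_int k))
     else
       (\<exists>M::int.
          ennreal (2 powr real_of_int M) \<le> (\<integral>\<^sup>+ t\<in>{0<..}. ennreal (u t) \<partial>lborel) \<and>
          (\<integral>\<^sup>+ t\<in>{0<..}. ennreal (u t) \<partial>lborel) < ennreal (2 powr real_of_int (M + 1)) \<and>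
          Z = {..M} \<and> strict_mono_on {..M+1} xs \<and>
          (\<forall>k\<le>M. \<exists>y>0. xs k = ereal y \<and>
            (\<integral>\<^sup>+ t\<in>{0<..y}. ennreal (u t) \<partial>lborel) = ennreal (2 powr real_of_int k)) \<and>
          xs (M + 1) = \<infinity>))"

definition lhs42 :: "real \<Rightarrow> real \<Rightarrow> (real \<Rightarrow> real) \<Rightarrow> (real \<Rightarrow> real) \<Rightarrow> (real \<Rightarrow> real) \<Rightarrow> ennreal" where
  "lhs42 q r u w h =
     epow (\<integral>\<^sup>+ x\<in>{0<..}.
        epow (\<integral>\<^sup>+ t\<in>{x<..}. epow (\<integral>\<^sup>+ s\<in>{t<..}. ennreal (h s) \<partial>lborel) q * ennreal (w t) \<partial>lborel) (r / q)
        * ennreal (u x) \<partial>lborel) (1 / r)"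

definition disc1 :: "real \<Rightarrow> real \<Rightarrow> int set \<Rightarrow> (int \<Rightarrow> ereal) \<Rightarrow> (real \<Rightarrow> real) \<Rightarrow> (real \<Rightarrow> real) \<Rightarrow> ennreal" where
  "disc1 q r Z xs w h =
     epow (\<integral>\<^sup>+ k. epow (ennreal (2 powr (real_of_int k / r)) *
        epow (\<integral>\<^sup>+ s\<in>{s. xs k < ereal s \<and> ereal s < xs (k + 1)}.
           epow (\<integral>\<^sup>+ t\<in>{t. s < t \<and> ereal t < xs (k + 1)}. ennreal (h t) \<partial>lborel) q
             * ennreal (w s) \<partial>lborel) (1 / q)) r \<partial>count_space Z) (1 / r)"

definition disc2 :: "real \<Rightarrow> real \<Rightarrow> int set \<Rightarrow> (int \<Rightarrow> ereal) \<Rightarrow> (real \<Rightarrow> real) \<Rightarrow> (real \<Rightarrow> real) \<Rightarrow> ennreal" where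
  "disc2 q r Z xs w h =
     epow (\<integral>\<^sup>+ k. epow (ennreal (2 powr (real_of_int k / r)) *
        epow (\<integral>\<^sup>+ s\<in>{s. xs k < ereal s \<and> ereal s < xs (k + 1)}. ennreal (w s) \<partial>lborel) (1 / q) *
        (\<integral>\<^sup>+ t\<in>{t. xs (k + 1) < ereal t}. ennreal (h t) \<partial>lborel)) r \<partial>count_space Z) (1 / r)"

end

theory Submission
  imports Defs
begin


lemma epow_top[simp]: "epow top p = top" by (simp add: epow_def)
lemma epow_0[simp]: "p > 0 \<Longrightarrow> epow 0 p = 0" by (simp add: epow_def)
lemma epow_ennreal: "0 \<le> c \<Longrightarrow> epow (ennreal c) p = ennreal (c powr p)"
  by (simp add: epow_def)

lemma epow_mono: assumes "p > 0" "a \<le> b" shows "epow a p \<le> epow b p"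
proof (cases "b = top")
  case True then show ?thesis by simp
next
  case False
  then have "a \<noteq> top" using assms top.extremum_uniqueI by auto
  then show ?thesis using False assms
    by (auto simp: epow_def top.not_eq_extremum intro!: ennreal_leI powr_mono2 enn2real_mono)
qed

lemma epow_mult: assumes "p > 0" shows "epow (a * b) p = epow a p * epow b p"
proof (cases "a = 0 \<or> b = 0")
  case True then show ?thesis using assms by auto
next
  case F: False
  show ?thesis
  proof (cases "a = top \<or> b = top")
    case True
    have "epow a p \<noteq> 0" "epow b p \<noteq> 0" using F assms
      by (auto simp: epow_def enn2real_eq_0_iff)
    then show ?thesis using True F by (auto simp: ennreal_mult_eq_top_iff)
  next
    case False
    then have "a * b \<noteq> top" by (simp add: ennreal_mult_eq_top_iff)
    then show ?thesis using False
      by (simp add: epow_def enn2real_mult powr_mult ennreal_mult)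
  qed
qed

lemma epow_epow: assumes "p > 0" "s > 0" shows "epow (epow a p) s = epow a (p * s)"
  using assms by (auto simp: epow_def powr_powr)

lemma epow_one[simp]: "epow a 1 = a"
  by (cases a) (auto simp: epow_def)

lemma epow_2powr: "epow (ennreal (2 powr x)) p = ennreal (2 powr (x * p))"
  by (simp add: epow_ennreal powr_powr)

lemma epow_max: assumes "p > 0" shows "epow (max a b) p = max (epow a p) (epow b p)"
  by (metis assms epow_mono max.absorb_iff2 max.commute nle_le)

lemma epow_add_le: assumes "p > 0"
  shows "epow (a + b) p \<le> ennreal (2 powr p) * (epow a p + epow b p)"
proof -
  have "a + b \<le> 2 * max a b"
    by (metis add_mono max.cobounded1 max.cobounded2 mult_2)
  then have "epow (a + b) p \<le> epow (2 * max a b) p" by (rule epow_mono[OF assms])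
  also have "\<dots> = epow 2 p * max (epow a p) (epow b p)"
    by (simp add: epow_mult epow_max assms)
  also have "epow 2 p = ennreal (2 powr p)"
    using epow_ennreal[of 2 p] by simp
  also have "max (epow a p) (epow b p) \<le> epow a p + epow b p"
    by (simp add: add_increasing add_increasing2)
  finally show ?thesis by (simp add: mult_left_mono)
qed

lemma epow_add_ge: assumes "p > 0"
  shows "epow a p + epow b p \<le> 2 * epow (a + b) p"
proof -
  have "epow a p \<le> epow (a + b) p"
    by (rule epow_mono[OF assms]) (simp add: add_increasing2)
  moreover have "epow b p \<le> epow (a + b) p"
    by (rule epow_mono[OF assms]) (simp add: add_increasing)
  ultimately
  show ?thesis by (metis add_mono mult_2)
qed

lemma epow_inv: assumes "p > 0" shows "epow (epow a p) (1/p) = a"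
  using assms by (simp add: epow_epow)

lemma epow_cmult_2powr: assumes "p > 0"
  shows "epow (ennreal (2 powr x) * a) p = ennreal (2 powr (x * p)) * epow a p"
  using assms by (simp add: epow_mult epow_2powr)




lemma geo_nat: assumes "c > 0"
  shows "(\<integral>\<^sup>+ n. ennreal (2 powr (- real n * c)) \<partial>count_space UNIV) = ennreal (1 / (1 - 2 powr - c))"
proof -
  have "2 powr - c < 2 powr 0" by (rule powr_less_mono) (use assms in auto)
  then have lt: "2 powr - c < 1" by simp
  have eq: "\<And>n. 2 powr (- real n * c) = (2 powr - c) ^ n"
    by (simp add: powr_realpow[symmetric] powr_powr mult.commute)
  have "(\<integral>\<^sup>+ n. ennreal (2 powr (- real n * c)) \<partial>count_space UNIV) = (\<Sum>n. ennreal ((2 powr - c) ^ n))"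
    by (simp only: nn_integral_count_space_nat eq)
  also have "\<dots> = ennreal (\<Sum>n. (2 powr - c) ^ n)"
    by (rule suminf_ennreal2) (auto intro!: summable_geometric simp: lt)
  also have "(\<Sum>n. (2 powr - c) ^ n) = 1 / (1 - 2 powr - c)"
    by (rule suminf_geometric) (simp add: lt)
  finally show ?thesis .
qed

lemma cs_le_univ: "(\<integral>\<^sup>+ j. f j \<partial>count_space Z) \<le> (\<integral>\<^sup>+ j. f j \<partial>count_space UNIV)"
  by (subst nn_integral_count_space_indicator[of Z])
     (auto intro!: nn_integral_mono simp: indicator_def)

lemma geo_up: assumes "c > 0"
  shows "(\<integral>\<^sup>+ j. ennreal (2 powr (- real_of_int (j - k) * c)) * indicator {k..} j \<partial>count_space Z)
         \<le> ennreal (1 / (1 - 2 powr - c))"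
proof -
  have bij: "bij_betw (\<lambda>n::nat. k + int n) UNIV {k..}"
    unfolding bij_betw_def inj_on_def
    by (auto simp: image_def intro!: exI[of _ "nat (x - k)" for x])
  have "(\<integral>\<^sup>+ j. ennreal (2 powr (- real_of_int (j - k) * c)) * indicator {k..} j \<partial>count_space Z)
      \<le> (\<integral>\<^sup>+ j. ennreal (2 powr (- real_of_int (j - k) * c)) * indicator {k..} j \<partial>count_space UNIV)"
    by (rule cs_le_univ)
  also have "\<dots> = (\<integral>\<^sup>+ j. ennreal (2 powr (- real_of_int (j - k) * c)) \<partial>count_space {k..})"
    by (simp add: nn_integral_count_space_indicator)
  also have "\<dots> = (\<integral>\<^sup>+ n. ennreal (2 powr (- real_of_int ((k + int n) - k) * c)) \<partial>count_space UNIV)"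
    by (rule nn_integral_bij_count_space[OF bij, symmetric])
  also have "\<dots> = ennreal (1 / (1 - 2 powr - c))"
    using geo_nat[OF assms] by simp
  finally show ?thesis .
qed

lemma geo_down: assumes "c > 0"
  shows "(\<integral>\<^sup>+ i. ennreal (2 powr (- real_of_int (j - i) * c)) * indicator {..j} i \<partial>count_space Z)
         \<le> ennreal (1 / (1 - 2 powr - c))"
proof -
  have bij: "bij_betw (\<lambda>n::nat. j - int n) UNIV {..j}"
    unfolding bij_betw_def inj_on_def
    by (auto simp: image_def intro!: exI[of _ "nat (j - x)" for x])
  have "(\<integral>\<^sup>+ i. ennreal (2 powr (- real_of_int (j - i) * c)) * indicator {..j} i \<partial>count_space Z)
      \<le> (\<integral>\<^sup>+ i. ennreal (2 powr (- real_of_int (j - i) * c)) * indicator {..j} i \<partial>count_space UNIV)"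
    by (rule cs_le_univ)
  also have "\<dots> = (\<integral>\<^sup>+ i. ennreal (2 powr (- real_of_int (j - i) * c)) \<partial>count_space {..j})"
    by (simp add: nn_integral_count_space_indicator)
  also have "\<dots> = (\<integral>\<^sup>+ n. ennreal (2 powr (- real_of_int (j - (j - int n)) * c)) \<partial>count_space UNIV)"
    by (rule nn_integral_bij_count_space[OF bij, symmetric])
  also have "\<dots> = ennreal (1 / (1 - 2 powr - c))"
    using geo_nat[OF assms] by simp
  finally show ?thesis .
qed




definition Chardy :: "real \<Rightarrow> real" where
  "Chardy p = (1 / (1 - 2 powr - (1 / (2 * p)))) powr p * (1 / (1 - 2 powr - (1/2)))"

lemma Chardy_pos: "p > 0 \<Longrightarrow> Chardy p > 0"
proof -
  assume p: "p > 0"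
  have a: "2 powr - c < 1" if "c > 0" for c :: real
  proof -
    have "2 powr - c < 2 powr 0" by (rule powr_less_mono) (use that in auto)
    then show ?thesis by simp
  qed
  have "1 / (1 - 2 powr - (1 / (2 * p))) > 0" using a[of "1/(2*p)"] p by simp
  moreover have "1 / (1 - 2 powr - (1/2)) > (0::real)" using a[of "1/2"] by simp
  ultimately show ?thesis unfolding Chardy_def using p by (intro mult_pos_pos) simp_all
qed

lemma pow_id: "2 powr real_of_int k * 2 powr (real_of_int (j-k)/2) = 2 powr (real_of_int j) * 2 powr (- real_of_int (j-k) * (1/2))"
proof -
  have "real_of_int k + real_of_int (j-k)/2 = real_of_int j + (- real_of_int (j-k) * (1/2))" by (simp add: field_simps)
  then show ?thesis by (metis powr_add)
qed

lemma hardy: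
  fixes a :: "int \<Rightarrow> ennreal" and p :: real
  assumes p: "p > 0"
  shows "(\<integral>\<^sup>+ k. ennreal (2 powr real_of_int k) * epow (\<integral>\<^sup>+ j. a j * indicator {k..} j \<partial>count_space Z) p \<partial>count_space Z)
        \<le> ennreal (Chardy p) * (\<integral>\<^sup>+ k. ennreal (2 powr real_of_int k) * epow (a k) p \<partial>count_space Z)"
proof -
  define e where "e = 1 / (2 * p)"
  have e: "e > 0" using p by (simp add: e_def)
  define Ge where "Ge = 1 / (1 - 2 powr - e)"
  define Gh where "Gh = 1 / (1 - 2 powr - (1/2::real))"
  have lt: "2 powr - c < 1" if "c > 0" for c :: real
  proof -
    have "2 powr - c < 2 powr 0" by (rule powr_less_mono) (use that in auto)
    then show ?thesis by simp
  qed
  have Ge0: "Ge \<ge> 0" using lt[OF e] by (simp add: Ge_def)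
  have Gh0: "Gh \<ge> 0" using lt[of "1/2"] by (simp add: Gh_def)
  define T where "T k = (\<integral>\<^sup>+ j. ennreal (2 powr (real_of_int (j-k)/2)) * epow (a j) p * indicator {k..} j \<partial>count_space Z)" for k
  have step1: "epow (\<integral>\<^sup>+ j. a j * indicator {k..} j \<partial>count_space Z) p \<le> ennreal (Ge powr p) * T k" for k
  proof -
    have pt: "a j * indicator {k..} j \<le> ennreal (2 powr (- real_of_int (j-k) * e)) * indicator {k..} j * epow (T k) (1/p)"
      if j: "j \<in> Z" for j
    proof (cases "k \<le> j")
      case False then show ?thesis by simp
    next
      case True
      have "ennreal (2 powr (real_of_int (j-k)/2)) * epow (a j) p * indicator {k..} j \<le> T k"
        unfolding T_def by (rule nn_integral_ge_point[OF j])
      then have h1: "ennreal (2 powr (real_of_int (j-k)/2)) * epow (a j) p \<le> T k" using True by simp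
      define d where "d = real_of_int (j-k)/2"
      have one: "ennreal (2 powr (-d)) * ennreal (2 powr d) = 1"
        by (simp add: ennreal_mult[symmetric] powr_add[symmetric] del: ennreal_mult')
      have "epow (a j) p = ennreal (2 powr (-d)) * (ennreal (2 powr d) * epow (a j) p)"
        by (simp add: mult.assoc[symmetric] one)
      also have "\<dots> \<le> ennreal (2 powr (-d)) * T k"
        by (rule mult_left_mono) (use h1 in \<open>simp_all add: d_def\<close>)
      finally have h2: "epow (a j) p \<le> ennreal (2 powr (-d)) * T k" .
      have "a j = epow (epow (a j) p) (1/p)" by (simp add: epow_inv p)
      also have "\<dots> \<le> epow (ennreal (2 powr (-d)) * T k) (1/p)"
        by (rule epow_mono[OF _ h2]) (simp add: p)
      also have "\<dots> = ennreal (2 powr (- real_of_int (j-k) * e)) * epow (T k) (1/p)"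
      proof -
        have eq: "- d * (1/p) = - real_of_int (j-k) * e" by (simp add: e_def d_def minus_divide_left)
        have "epow (ennreal (2 powr (-d)) * T k) (1/p) = ennreal (2 powr (- d * (1/p))) * epow (T k) (1/p)"
          by (rule epow_cmult_2powr) (simp add: p)
        then show ?thesis unfolding eq .
      qed
      finally show ?thesis using True by simp
    qed
    have "(\<integral>\<^sup>+ j. a j * indicator {k..} j \<partial>count_space Z)
        \<le> (\<integral>\<^sup>+ j. ennreal (2 powr (- real_of_int (j-k) * e)) * indicator {k..} j * epow (T k) (1/p) \<partial>count_space Z)"
      by (rule nn_integral_mono) (use pt in simp)
    also have "\<dots> = (\<integral>\<^sup>+ j. ennreal (2 powr (- real_of_int (j-k) * e)) * indicator {k..} j \<partial>count_space Z) * epow (T k) (1/p)"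
      by (simp add: nn_integral_multc)
    also have "\<dots> \<le> ennreal Ge * epow (T k) (1/p)"
      by (rule mult_right_mono) (use geo_up[OF e, where k=k and Z=Z] in \<open>simp_all add: Ge_def\<close>)
    finally have "epow (\<integral>\<^sup>+ j. a j * indicator {k..} j \<partial>count_space Z) p \<le> epow (ennreal Ge * epow (T k) (1/p)) p"
      by (rule epow_mono[OF p])
    also have "\<dots> = ennreal (Ge powr p) * T k"
      using p Ge0 by (simp add: epow_mult epow_epow epow_ennreal)
    finally show ?thesis .
  qed
  have "(\<integral>\<^sup>+ k. ennreal (2 powr real_of_int k) * epow (\<integral>\<^sup>+ j. a j * indicator {k..} j \<partial>count_space Z) p \<partial>count_space Z)
      \<le> (\<integral>\<^sup>+ k. ennreal (Ge powr p) * (ennreal (2 powr real_of_int k) * T k) \<partial>count_space Z)"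
    by (rule nn_integral_mono) (metis (no_types, lifting) step1 mult.left_commute mult_left_mono zero_le)
  also have "\<dots> = ennreal (Ge powr p) * (\<integral>\<^sup>+ k. ennreal (2 powr real_of_int k) * T k \<partial>count_space Z)"
    by (simp add: nn_integral_cmult)
  also have "(\<integral>\<^sup>+ k. ennreal (2 powr real_of_int k) * T k \<partial>count_space Z)
      = (\<integral>\<^sup>+ k. \<integral>\<^sup>+ j. ennreal (2 powr real_of_int k) * (ennreal (2 powr (real_of_int (j-k)/2)) * epow (a j) p * indicator {k..} j) \<partial>count_space Z \<partial>count_space Z)"
    unfolding T_def by (simp add: nn_integral_cmult)
  also have "\<dots> = (\<integral>\<^sup>+ j. \<integral>\<^sup>+ k. ennreal (2 powr real_of_int k) * (ennreal (2 powr (real_of_int (j-k)/2)) * epow (a j) p * indicator {k..} j) \<partial>count_space Z \<partial>count_space Z)"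
    by (rule nn_integral_count_space_nn_integral[symmetric]) simp_all
  also have "\<dots> = (\<integral>\<^sup>+ j. ennreal (2 powr real_of_int j) * epow (a j) p * (\<integral>\<^sup>+ k. ennreal (2 powr (- real_of_int (j-k) * (1/2))) * indicator {..j} k \<partial>count_space Z) \<partial>count_space Z)"
  proof (rule nn_integral_cong)
    fix j
    have "\<And>k. ennreal (2 powr real_of_int k) * (ennreal (2 powr (real_of_int (j-k)/2)) * epow (a j) p * indicator {k..} j)
        = ennreal (2 powr real_of_int j) * epow (a j) p * (ennreal (2 powr (- real_of_int (j-k) * (1/2))) * indicator {..j} k)"
    proof -
      fix k
      have "ennreal (2 powr real_of_int k) * ennreal (2 powr (real_of_int (j-k)/2)) = ennreal (2 powr (real_of_int j)) * ennreal (2 powr (- real_of_int (j-k) * (1/2)))"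
        by (metis ennreal_mult powr_ge_zero pow_id)
      then show "ennreal (2 powr real_of_int k) * (ennreal (2 powr (real_of_int (j-k)/2)) * epow (a j) p * indicator {k..} j)
        = ennreal (2 powr real_of_int j) * epow (a j) p * (ennreal (2 powr (- real_of_int (j-k) * (1/2))) * indicator {..j} k)"
        by (simp add: indicator_def mult_ac)
    qed
    then show "(\<integral>\<^sup>+ k. ennreal (2 powr real_of_int k) * (ennreal (2 powr (real_of_int (j-k)/2)) * epow (a j) p * indicator {k..} j) \<partial>count_space Z)
       = ennreal (2 powr real_of_int j) * epow (a j) p * (\<integral>\<^sup>+ k. ennreal (2 powr (- real_of_int (j-k) * (1/2))) * indicator {..j} k \<partial>count_space Z)"
      by (simp add: nn_integral_cmult)
  qed
  also have "\<dots> \<le> (\<integral>\<^sup>+ j. ennreal (2 powr real_of_int j) * epow (a j) p * ennreal Gh \<partial>count_space Z)"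
    by (rule nn_integral_mono) (use geo_down[where c="1/2" and Z=Z] in \<open>auto simp: Gh_def intro!: mult_left_mono\<close>)
  also have "\<dots> = ennreal Gh * (\<integral>\<^sup>+ j. ennreal (2 powr real_of_int j) * epow (a j) p \<partial>count_space Z)"
    by (subst nn_integral_cmult[symmetric]) (auto simp: mult_ac)
  finally have "(\<integral>\<^sup>+ k. ennreal (2 powr real_of_int k) * epow (\<integral>\<^sup>+ j. a j * indicator {k..} j \<partial>count_space Z) p \<partial>count_space Z)
      \<le> ennreal (Ge powr p) * (ennreal Gh * (\<integral>\<^sup>+ j. ennreal (2 powr real_of_int j) * epow (a j) p \<partial>count_space Z))"
    by (simp add: mult_left_mono)
  also have "\<dots> = ennreal (Chardy p) * (\<integral>\<^sup>+ k. ennreal (2 powr real_of_int k) * epow (a k) p \<partial>count_space Z)"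
  proof -
    have cd: "Chardy p = Ge powr p * Gh" by (simp add: Chardy_def Ge_def Gh_def e_def)
    have "ennreal (Chardy p) = ennreal (Ge powr p) * ennreal Gh"
      unfolding cd by (rule ennreal_mult) (simp_all add: Gh0)
    then show ?thesis by (simp add: mult.assoc)
  qed
  finally show ?thesis .
qed




definition Uf :: "(real \<Rightarrow> real) \<Rightarrow> real \<Rightarrow> ennreal" where
  "Uf u y = (\<integral>\<^sup>+ t\<in>{0<..y}. ennreal (u t) \<partial>lborel)"
definition Utot :: "(real \<Rightarrow> real) \<Rightarrow> ennreal" where
  "Utot u = (\<integral>\<^sup>+ t\<in>{0<..}. ennreal (u t) \<partial>lborel)"

definition cov :: "(real \<Rightarrow> real) \<Rightarrow> int set \<Rightarrow> (int \<Rightarrow> ereal) \<Rightarrow> bool" where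
  "cov u Z xs \<longleftrightarrow> (\<exists>m. m \<in> Z) \<and> (\<forall>k\<in>Z. \<forall>j\<le>k. j \<in> Z) \<and>
     (\<forall>k\<in>Z. \<exists>y>0. xs k = ereal y \<and> Uf u y = ennreal (2 powr real_of_int k)) \<and>
     (\<forall>k\<in>Z. k + 1 \<notin> Z \<longrightarrow> xs (k+1) = \<infinity> \<and> Utot u < ennreal (2 powr real_of_int (k+1))) \<and>
     (\<forall>j\<in>Z. \<forall>k\<in>Z. j < k \<longrightarrow> xs (j+1) \<le> xs k) \<and>
     (\<forall>k\<in>Z. xs k < xs (k+1))"

lemma covering_cov: assumes "covering_seq u Z xs" shows "cov u Z xs"
proof (cases "(\<integral>\<^sup>+ t\<in>{0<..}. ennreal (u t) \<partial>lborel) = \<infinity>")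
  case True
  then have Z: "Z = UNIV" and sm: "strict_mono xs" and
    pts: "\<forall>k. \<exists>y>0. xs k = ereal y \<and> (\<integral>\<^sup>+ t\<in>{0<..y}. ennreal (u t) \<partial>lborel) = ennreal (2 powr real_of_int k)"
    using assms unfolding covering_seq_def by auto
  show ?thesis unfolding cov_def Z Uf_def
    using pts by (auto intro: strict_mono_leD[OF sm] strict_monoD[OF sm])
next
  case False
  then obtain M :: int where
    b: "(\<integral>\<^sup>+ t\<in>{0<..}. ennreal (u t) \<partial>lborel) < ennreal (2 powr real_of_int (M + 1))" and
    Z: "Z = {..M}" and sm: "strict_mono_on {..M+1} xs" and
    pts: "\<forall>k\<le>M. \<exists>y>0. xs k = ereal y \<and> (\<integral>\<^sup>+ t\<in>{0<..y}. ennreal (u t) \<partial>lborel) = ennreal (2 powr real_of_int k)" and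
    inf: "xs (M + 1) = \<infinity>"
    using assms unfolding covering_seq_def by auto
  have 5: "xs (j+1) \<le> xs k" if "j \<le> M" "k \<le> M" "j < k" for j k
    by (rule strict_mono_on_leD[OF sm]) (use that in auto)
  have 6: "xs k < xs (k+1)" if "k \<le> M" for k
    by (rule strict_mono_onD[OF sm]) (use that in auto)
  have eqM: "k = M" if "k \<le> M" "\<not> k + 1 \<le> M" for k using that by simp
  show ?thesis unfolding cov_def Z Uf_def Utot_def
    using pts 5 6 b inf by (auto dest!: eqM)
qed

lemma cov_partition:
  assumes c: "cov u Z xs" and w: "is_weight u" and t: "t > 0"
  shows "\<exists>k\<in>Z. xs k < ereal t \<and> ereal t \<le> xs (k+1)"
proof -
  from c obtain m where m: "m \<in> Z" unfolding cov_def by auto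
  have down: "\<And>k j. k \<in> Z \<Longrightarrow> j \<le> k \<Longrightarrow> j \<in> Z" using c unfolding cov_def by auto
  have pts: "\<And>k. k\<in>Z \<Longrightarrow> \<exists>y>0. xs k = ereal y \<and> Uf u y = ennreal (2 powr real_of_int k)"
    using c unfolding cov_def by auto
  have top: "\<And>k. k\<in>Z \<Longrightarrow> k + 1 \<notin> Z \<Longrightarrow> xs (k+1) = \<infinity>"
    using c unfolding cov_def by auto
  have Ut: "0 < Uf u t" "Uf u t < \<infinity>" using w t unfolding is_weight_def Uf_def by auto
  define c where "c = enn2real (Uf u t)"
  have cpos: "c > 0" and Uc: "Uf u t = ennreal c" using Ut
    by (auto simp: c_def enn2real_positive_iff less_top[symmetric])
  have Umono: "Uf u a \<le> Uf u b" if "a \<le> b" for a b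
    unfolding Uf_def using that by (intro nn_integral_mono) (auto simp: indicator_def)
  define j1 where "j1 = min m (\<lfloor>log 2 c\<rfloor> - 1)"
  have j1Z: "j1 \<in> Z" using down[OF m] by (simp add: j1_def)
  have "real_of_int j1 \<le> real_of_int (\<lfloor>log 2 c\<rfloor> - 1)" by (simp add: j1_def)
  also have "\<dots> \<le> log 2 c - 1" using of_int_floor_le[of "log 2 c"] by simp
  finally have "2 powr real_of_int j1 \<le> 2 powr (log 2 c - 1)"
    by (rule powr_mono) simp
  also have "\<dots> = c / 2" using cpos by (simp add: powr_diff)
  finally have j1c: "2 powr real_of_int j1 < c" using cpos by simp
  have j1t: "xs j1 < ereal t"
  proof (rule ccontr)
    assume "\<not> xs j1 < ereal t"
    obtain y where y: "y > 0" "xs j1 = ereal y" "Uf u y = ennreal (2 powr real_of_int j1)" using pts[OF j1Z] by auto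
    then have "t \<le> y" using \<open>\<not> xs j1 < ereal t\<close> by simp
    then have "Uf u t \<le> Uf u y" by (rule Umono)
    then show False using y j1c Uc by simp
  qed
  define N where "N = \<lceil>log 2 c\<rceil> + 1"
  have "c = 2 powr (log 2 c)" using cpos by simp
  also have "\<dots> < 2 powr real_of_int N"
    by (rule powr_less_mono) (auto simp: N_def intro: le_less_trans[OF le_of_int_ceiling])
  finally have cN: "c < 2 powr real_of_int N" .
  define S where "S = {i\<in>Z. xs i < ereal t}"
  have Sb: "i < N" if iS: "i \<in> S" for i
  proof -
    have iZ: "i \<in> Z" using iS by (simp add: S_def)
    obtain y where y: "y > 0" "xs i = ereal y" "Uf u y = ennreal (2 powr real_of_int i)"
      using pts[OF iZ] by auto
    then have "y \<le> t" using iS by (auto simp: S_def)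
    then have "Uf u y \<le> Uf u t" by (rule Umono)
    then have "ennreal (2 powr real_of_int i) \<le> ennreal c" using y Uc by simp
    then have "2 powr real_of_int i \<le> c" using cpos by (simp add: ennreal_le_iff)
    then have "2 powr real_of_int i < 2 powr real_of_int N" using cN by linarith
    then show ?thesis by simp
  qed
  define S' where "S' = S \<inter> {j1..N}"
  have fin: "finite S'" by (simp add: S'_def)
  have ne: "j1 \<in> S'" using j1t j1Z Sb[of j1] by (auto simp: S'_def S_def)
  define k where "k = Max S'"
  have kS: "k \<in> S'" unfolding k_def using fin ne by (intro Max_in) auto
  have kmax: "i \<le> k" if "i \<in> S" for i
  proof (cases "i < j1")
    case True then show ?thesis using kS by (auto simp: S'_def)
  next
    case False then have "i \<in> S'" using that Sb[OF that] by (auto simp: S'_def)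
    then show ?thesis using fin by (simp add: k_def)
  qed
  have kZ: "k \<in> Z" and kt: "xs k < ereal t" using kS by (auto simp: S'_def S_def)
  have "ereal t \<le> xs (k+1)"
  proof (cases "k + 1 \<in> Z")
    case True
    have "k + 1 \<notin> S" using kmax by fastforce
    then show ?thesis using True by (auto simp: S_def)
  next
    case False then show ?thesis using top[OF kZ] by simp
  qed
  then show ?thesis using kZ kt by auto
qed




definition Jset :: "(int \<Rightarrow> ereal) \<Rightarrow> int \<Rightarrow> real set" where
  "Jset xs k = {s. xs k < ereal s \<and> ereal s \<le> xs (k+1)}"
definition Iset :: "(int \<Rightarrow> ereal) \<Rightarrow> int \<Rightarrow> real set" where
  "Iset xs k = {s. xs k < ereal s \<and> ereal s < xs (k+1)}"

lemma Jset_sets[measurable]: "Jset xs k \<in> sets lborel"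
  unfolding Jset_def by measurable
lemma Iset_sets[measurable]: "Iset xs k \<in> sets lborel"
  unfolding Iset_def by measurable

lemma partition_integral:
  fixes f :: "real \<Rightarrow> ennreal" and Z :: "int set"
  assumes f[measurable]: "f \<in> borel_measurable lborel"
    and S[measurable]: "\<And>k. S k \<in> sets lborel"
    and disj: "\<And>k j t. k \<in> Z \<Longrightarrow> j \<in> Z \<Longrightarrow> t \<in> S k \<Longrightarrow> t \<in> S j \<Longrightarrow> k = j"
  shows "(\<integral>\<^sup>+ k. (\<integral>\<^sup>+ t\<in>S k. f t \<partial>lborel) \<partial>count_space Z) = (\<integral>\<^sup>+ t\<in>(\<Union>k\<in>Z. S k). f t \<partial>lborel)"
proof -
  have "(\<integral>\<^sup>+ k. (\<integral>\<^sup>+ t\<in>S k. f t \<partial>lborel) \<partial>count_space Z) = (\<integral>\<^sup>+ t. \<integral>\<^sup>+ k. f t * indicator (S k) t \<partial>count_space Z \<partial>lborel)"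
    by (rule nn_integral_count_space_nn_integral[symmetric]) auto
  also have "\<dots> = (\<integral>\<^sup>+ t\<in>(\<Union>k\<in>Z. S k). f t \<partial>lborel)"
  proof (rule nn_integral_cong)
    fix t
    show "(\<integral>\<^sup>+ k. f t * indicator (S k) t \<partial>count_space Z) = f t * indicator (\<Union>k\<in>Z. S k) t"
    proof (cases "\<exists>k0\<in>Z. t \<in> S k0")
      case True
      then obtain k0 where k0: "k0 \<in> Z" "t \<in> S k0" by auto
      have "(\<integral>\<^sup>+ k. f t * indicator (S k) t \<partial>count_space Z) = (\<integral>\<^sup>+ k. f t * indicator (S k) t \<partial>count_space {k0})"
        by (rule nn_integral_count_space_eq) (use k0 disj in \<open>auto simp: indicator_def\<close>)
      also have "\<dots> = f t" using k0 by (simp add: nn_integral_count_space_finite)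
      finally show ?thesis using k0 by (auto simp: indicator_def)
    next
      case False
      have "(\<integral>\<^sup>+ k. f t * indicator (S k) t \<partial>count_space Z) = (\<integral>\<^sup>+ k. 0 \<partial>count_space Z)"
        by (rule nn_integral_cong) (use False in auto)
      then show ?thesis using False by (auto simp: indicator_def)
    qed
  qed
  finally show ?thesis .
qed

lemma cov_mono: assumes "cov u Z xs" "m \<in> Z" "k \<in> Z" "m \<le> k" shows "xs m \<le> xs k"
proof (cases "m = k")
  case False
  then have "m < k" using assms by simp
  then have "xs m < xs (m+1)" "xs (m+1) \<le> xs k" using assms unfolding cov_def by auto
  then show ?thesis by simp
qed simp

lemma cov_J_disj: assumes c: "cov u Z xs" and "k \<in> Z" "j \<in> Z" "t \<in> Jset xs k" "t \<in> Jset xs j"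
  shows "k = j"
proof (rule ccontr)
  have *: False if "a \<in> Z" "b \<in> Z" "a < b" "t \<in> Jset xs a" "t \<in> Jset xs b" for a b
  proof -
    have "xs (a+1) \<le> xs b" using c that unfolding cov_def by auto
    then show False using that unfolding Jset_def by auto
  qed
  assume "k \<noteq> j"
  then show False using *[of k j] *[of j k] assms by linarith
qed

lemma cov_pt: assumes "cov u Z xs" "k \<in> Z"
  obtains y where "y > 0" "xs k = ereal y" "Uf u y = ennreal (2 powr real_of_int k)"
  using assms unfolding cov_def by auto

lemma union_J: assumes c: "cov u Z xs" and w: "is_weight u"
  shows "(\<Union>k\<in>Z. Jset xs k) = {0<..}"
proof
  show "(\<Union>k\<in>Z. Jset xs k) \<subseteq> {0<..}"
  proof
    fix t assume "t \<in> (\<Union>k\<in>Z. Jset xs k)"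
    then obtain k where k: "k \<in> Z" "t \<in> Jset xs k" by auto
    obtain y where "y > 0" "xs k = ereal y" using cov_pt[OF c k(1)] by auto
    then show "t \<in> {0<..}" using k by (auto simp: Jset_def)
  qed
  show "{0<..} \<subseteq> (\<Union>k\<in>Z. Jset xs k)"
    using cov_partition[OF c w] by (auto simp: Jset_def)
qed

lemma union_J_ge: assumes c: "cov u Z xs" and w: "is_weight u" and m: "m \<in> Z" and y: "xs m = ereal y"
  shows "(\<Union>k\<in>{k\<in>Z. m \<le> k}. Jset xs k) = {y<..}"
proof
  show "(\<Union>k\<in>{k\<in>Z. m \<le> k}. Jset xs k) \<subseteq> {y<..}"
  proof
    fix t assume "t \<in> (\<Union>k\<in>{k\<in>Z. m \<le> k}. Jset xs k)"
    then obtain k where k: "k \<in> Z" "m \<le> k" "t \<in> Jset xs k" by auto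
    have "xs m \<le> xs k" using cov_mono[OF c m k(1,2)] .
    then have "xs m < ereal t" using k by (auto simp: Jset_def intro: order.strict_trans1)
    then show "t \<in> {y<..}" using y by simp
  qed
  show "{y<..} \<subseteq> (\<Union>k\<in>{k\<in>Z. m \<le> k}. Jset xs k)"
  proof
    fix t assume t: "t \<in> {y<..}"
    obtain y' where "y' > 0" "xs m = ereal y'" using cov_pt[OF c m] by auto
    then have "t > 0" using t y by auto
    then obtain k where k: "k \<in> Z" "xs k < ereal t" "ereal t \<le> xs (k+1)"
      using cov_partition[OF c w] by blast
    have "m \<le> k"
    proof (rule ccontr)
      assume "\<not> m \<le> k"
      then have "xs (k+1) \<le> xs m" using c k m unfolding cov_def by auto
      then have "ereal t \<le> ereal y" using k y by (metis order.trans)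
      then show False using t by simp
    qed
    then show "t \<in> (\<Union>k\<in>{k\<in>Z. m \<le> k}. Jset xs k)" using k by (auto simp: Jset_def)
  qed
qed

lemma int_over_J:
  assumes c: "cov u Z xs" and w: "is_weight u" and f: "f \<in> borel_measurable lborel"
  shows "(\<integral>\<^sup>+ k. (\<integral>\<^sup>+ t\<in>Jset xs k. f t \<partial>lborel) \<partial>count_space Z) = (\<integral>\<^sup>+ t\<in>{0<..}. f t \<partial>lborel)"
  using partition_integral[OF f Jset_sets cov_J_disj[OF c]] union_J[OF c w] by simp

lemma int_over_J_ge:
  assumes c: "cov u Z xs" and w: "is_weight u" and f: "f \<in> borel_measurable lborel"
    and m: "m \<in> Z" and y: "xs m = ereal y"
  shows "(\<integral>\<^sup>+ k. (\<integral>\<^sup>+ t\<in>Jset xs k. f t \<partial>lborel) * indicator {m..} k \<partial>count_space Z) = (\<integral>\<^sup>+ t\<in>{y<..}. f t \<partial>lborel)"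
proof -
  have "(\<integral>\<^sup>+ k. (\<integral>\<^sup>+ t\<in>Jset xs k. f t \<partial>lborel) * indicator {m..} k \<partial>count_space Z)
      = (\<integral>\<^sup>+ k. (\<integral>\<^sup>+ t\<in>Jset xs k. f t \<partial>lborel) \<partial>count_space {k\<in>Z. m \<le> k})"
    by (auto simp: nn_integral_count_space_indicator indicator_def intro!: nn_integral_cong)
  also have "\<dots> = (\<integral>\<^sup>+ t\<in>(\<Union>k\<in>{k\<in>Z. m \<le> k}. Jset xs k). f t \<partial>lborel)"
    by (rule partition_integral[OF f Jset_sets]) (use cov_J_disj[OF c] in auto)
  also have "\<dots> = (\<integral>\<^sup>+ t\<in>{y<..}. f t \<partial>lborel)"
    using union_J_ge[OF c w m y] by simp
  finally show ?thesis .
qed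

lemma J_u:
  assumes c: "cov u Z xs" and w: "is_weight u" and k: "k \<in> Z"
  shows "(\<integral>\<^sup>+ t\<in>Jset xs k. ennreal (u t) \<partial>lborel) \<le> ennreal (2 powr real_of_int k)"
    and "k + 1 \<in> Z \<Longrightarrow> (\<integral>\<^sup>+ t\<in>Jset xs k. ennreal (u t) \<partial>lborel) = ennreal (2 powr real_of_int k)"
proof -
  have um[measurable]: "u \<in> borel_measurable borel" using w by (simp add: is_weight_def nonneg_meas_def)
  obtain y where y: "y > 0" "xs k = ereal y" "Uf u y = ennreal (2 powr real_of_int k)"
    using cov_pt[OF c k] by auto
  define a where "a = ennreal (2 powr real_of_int k)"
  have a2: "ennreal (2 powr real_of_int (k+1)) = a + a"
    by (simp add: a_def powr_add ennreal_plus[symmetric] del: ennreal_plus)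
  have afin: "a \<noteq> \<infinity>" by (simp add: a_def)
  define X where "X = (\<integral>\<^sup>+ t\<in>Jset xs k. ennreal (u t) \<partial>lborel)"
  have main: "X \<le> a \<and> (k + 1 \<in> Z \<longrightarrow> X = a)"
  proof (cases "k + 1 \<in> Z")
    case True
    obtain y' where y': "y' > 0" "xs (k+1) = ereal y'" "Uf u y' = ennreal (2 powr real_of_int (k+1))"
      using cov_pt[OF c True] by auto
    have J: "Jset xs k = {y<..y'}" using y y' by (auto simp: Jset_def)
    have "{0<..y'} = {0<..y} \<union> {y<..y'}" using y y' c k unfolding cov_def by auto
    then have "Uf u y' = Uf u y + X"
      unfolding Uf_def X_def J by (simp add: nn_integral_disjoint_pair)
    then have "a + a = a + X" using y y' a2 by (simp add: a_def)
    then have "X = a" using afin by (simp add: ennreal_add_left_cancel)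
    then show ?thesis by simp
  next
    case False
    then have inf: "xs (k+1) = \<infinity>" and lt: "Utot u < ennreal (2 powr real_of_int (k+1))"
      using c k unfolding cov_def by auto
    have J: "Jset xs k = {y<..}" using y inf by (auto simp: Jset_def)
    have "{0<..} = {0<..y} \<union> {y<..}" using y by auto
    then have "Utot u = (\<integral>\<^sup>+ t\<in>{0<..y} \<union> {y<..}. ennreal (u t) \<partial>lborel)"
      unfolding Utot_def by simp
    also have "\<dots> = Uf u y + X"
      unfolding Uf_def X_def J by (rule nn_integral_disjoint_pair) auto
    finally have "Utot u = Uf u y + X" .
    then have lt2: "a + X < a + a" using lt y a2 by (simp add: a_def)
    have "X < a"
    proof (rule ccontr)
      assume "\<not> X < a"
      then have "a + a \<le> a + X" by (simp add: add_left_mono)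
      then show False using lt2 by (meson not_le)
    qed
    then show ?thesis using False by simp
  qed
  then show "X \<le> a" by simp
  show "k + 1 \<in> Z \<Longrightarrow> X = a" using main by simp
qed




lemma meas_param:
  fixes f :: "real \<Rightarrow> ennreal"
  assumes f: "f \<in> borel_measurable borel" and P: "Measurable.pred (borel \<Otimes>\<^sub>M lborel) (\<lambda>x::real\<times>real. P (fst x) (snd x))"
  shows "(\<lambda>t. \<integral>\<^sup>+ s. f s * indicator {s. P t s} s \<partial>lborel) \<in> borel_measurable borel"
proof -
  have 1[measurable]: "(\<lambda>x. f (snd x)) \<in> borel_measurable (borel \<Otimes>\<^sub>M lborel)"
    by (rule measurable_compose[OF measurable_snd]) (simp add: f)
  have 2[measurable]: "(\<lambda>x. indicator {s. P (fst x) s} (snd x) :: ennreal) \<in> borel_measurable (borel \<Otimes>\<^sub>M lborel)"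
      using P unfolding indicator_def by simp
  have "(\<lambda>x::real\<times>real. f (snd x) * indicator {s. P (fst x) s} (snd x)) \<in> borel_measurable (borel \<Otimes>\<^sub>M lborel)"
    by measurable
  then show ?thesis using lborel.borel_measurable_nn_integral[of "\<lambda>t s. f s * indicator {s. P t s} s" borel] by simp
qed

lemma epow_measurable[measurable (raw)]:
  assumes f[measurable]: "f \<in> borel_measurable M"
  shows "(\<lambda>x. epow (f x) p) \<in> borel_measurable M"
proof -
  have [measurable]: "{x \<in> space M. f x = top} \<in> sets M" by measurable
  show ?thesis unfolding epow_def by measurable
qed

lemma AE_ne_ereal: "AE s in lborel. ereal s \<noteq> X"
proof (cases X)
  case (real z)
  show ?thesis using AE_lborel_singleton[of z] by (rule eventually_mono) (simp add: real)
qed simp_all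

definition Hh :: "(real \<Rightarrow> real) \<Rightarrow> real \<Rightarrow> ennreal" where
  "Hh h t = (\<integral>\<^sup>+ s\<in>{t<..}. ennreal (h s) \<partial>lborel)"
definition Ain :: "(real \<Rightarrow> real) \<Rightarrow> ereal \<Rightarrow> real \<Rightarrow> ennreal" where
  "Ain h X s = (\<integral>\<^sup>+ t\<in>{t. s < t \<and> ereal t < X}. ennreal (h t) \<partial>lborel)"
definition Hx :: "(real \<Rightarrow> real) \<Rightarrow> ereal \<Rightarrow> ennreal" where
  "Hx h X = (\<integral>\<^sup>+ t\<in>{t. X < ereal t}. ennreal (h t) \<partial>lborel)"
definition Gf :: "real \<Rightarrow> (real \<Rightarrow> real) \<Rightarrow> (real \<Rightarrow> real) \<Rightarrow> real \<Rightarrow> ennreal" where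
  "Gf q w h t = epow (Hh h t) q * ennreal (w t)"
definition Ff :: "real \<Rightarrow> (real \<Rightarrow> real) \<Rightarrow> (real \<Rightarrow> real) \<Rightarrow> real \<Rightarrow> ennreal" where
  "Ff q w h x = (\<integral>\<^sup>+ t\<in>{x<..}. Gf q w h t \<partial>lborel)"

lemma Hh_meas[measurable]: "h \<in> borel_measurable borel \<Longrightarrow> Hh h \<in> borel_measurable borel"
  unfolding Hh_def greaterThan_def
  by (rule meas_param[where P="\<lambda>t s. t < s"]) (auto simp: measurable_lborel2)

lemma Ain_meas[measurable]: "h \<in> borel_measurable borel \<Longrightarrow> Ain h X \<in> borel_measurable borel"
  unfolding Ain_def
  by (rule meas_param[where P="\<lambda>t s. t < s \<and> ereal s < X"]) (auto simp: measurable_lborel2)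

lemma Gf_meas[measurable]:
  assumes [measurable]: "h \<in> borel_measurable borel" "w \<in> borel_measurable borel"
  shows "Gf q w h \<in> borel_measurable borel"
  unfolding Gf_def by measurable

lemma Ff_meas[measurable]: "h \<in> borel_measurable borel \<Longrightarrow> w \<in> borel_measurable borel \<Longrightarrow> Ff q w h \<in> borel_measurable borel"
  unfolding Ff_def greaterThan_def
  by (rule meas_param[where P="\<lambda>t s. t < s"]) (auto simp: measurable_lborel2)

lemma Ff_anti: "x \<le> y \<Longrightarrow> Ff q w h y \<le> Ff q w h x"
  unfolding Ff_def by (intro nn_integral_mono) (auto simp: indicator_def)

lemma set_int_mono:
  assumes "\<And>x. x \<in> A \<Longrightarrow> f x \<le> g x"
  shows "(\<integral>\<^sup>+ x\<in>A. f x \<partial>M) \<le> (\<integral>\<^sup>+ x\<in>A. g x \<partial>M)"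
  by (intro nn_integral_mono) (auto simp: indicator_def assms)

lemma Hh_split:
  assumes "ereal t \<le> X" and hm: "h \<in> borel_measurable borel"
  shows "Hh h t \<le> Ain h X t + Hx h X"
proof -
  have "Hh h t \<le> (\<integral>\<^sup>+ s. ennreal (h s) * indicator {s. t < s \<and> ereal s < X} s + ennreal (h s) * indicator {s. X < ereal s} s \<partial>lborel)"
    unfolding Hh_def
  proof (rule nn_integral_mono_AE)
    show "AE s in lborel. ennreal (h s) * indicator {t<..} s \<le> ennreal (h s) * indicator {s. t < s \<and> ereal s < X} s + ennreal (h s) * indicator {s. X < ereal s} s"
      using AE_ne_ereal[of X]
    proof eventually_elim
      case (elim s)
      show ?case
      proof (cases "t < s")
        case True
        show ?thesis
        proof (rule linorder_neqE[OF elim])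
          assume "ereal s < X" then show ?thesis using True by (simp add: indicator_def)
        next
          assume "ereal s > X" then show ?thesis using True by (simp add: indicator_def)
        qed
      qed (simp add: indicator_def)
    qed
  qed
  also have "\<dots> = Ain h X t + Hx h X"
    unfolding Ain_def Hx_def by (rule nn_integral_add) (use hm in auto)
  finally show ?thesis .
qed




lemma Jset_borel[simp, measurable]: "Jset xs k \<in> sets borel"
  using Jset_sets by simp
lemma Iset_borel[simp, measurable]: "Iset xs k \<in> sets borel"
  using Iset_sets by simp

lemma set_int_cmult:
  assumes [measurable]: "f \<in> borel_measurable M" "A \<in> sets M"
  shows "(\<integral>\<^sup>+ t\<in>A. c * f t \<partial>M) = c * (\<integral>\<^sup>+ t\<in>A. f t \<partial>M)"
  by (simp add: mult.assoc nn_integral_cmult)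

lemma set_int_add:
  assumes [measurable]: "f \<in> borel_measurable M" "g \<in> borel_measurable M" "A \<in> sets M"
  shows "(\<integral>\<^sup>+ t\<in>A. f t + g t \<partial>M) = (\<integral>\<^sup>+ t\<in>A. f t \<partial>M) + (\<integral>\<^sup>+ t\<in>A. g t \<partial>M)"
  by (simp add: distrib_right nn_integral_add)

lemma JI_int: "(\<integral>\<^sup>+ t\<in>Jset xs j. f t \<partial>lborel) = (\<integral>\<^sup>+ t\<in>Iset xs j. f t \<partial>lborel)"
  by (rule nn_integral_cong_AE, rule eventually_mono[OF AE_ne_ereal[of "xs (j+1)"]])
     (auto simp: Jset_def Iset_def indicator_def)

locale L42 =
  fixes q r :: real and u w h :: "real \<Rightarrow> real" and Z :: "int set" and xs :: "int \<Rightarrow> ereal"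
  assumes q: "q > 0" and r: "r > 0" and wu: "is_weight u" and ww: "is_weight w"
    and hh: "nonneg_meas h" and c: "cov u Z xs"
begin

lemma hm[measurable]: "h \<in> borel_measurable borel" using hh by (simp add: nonneg_meas_def)
lemma um[measurable]: "u \<in> borel_measurable borel" using wu by (simp add: is_weight_def nonneg_meas_def)
lemma wm[measurable]: "w \<in> borel_measurable borel" using ww by (simp add: is_weight_def nonneg_meas_def)

lemma P: "r / q > 0" using q r by simp

definition yv :: "int \<Rightarrow> real" where "yv k = real_of_ereal (xs k)"

lemma yv: assumes "k \<in> Z" shows "xs k = ereal (yv k)" "yv k > 0"
proof -
  obtain y where "y > 0" "xs k = ereal y" using cov_pt[OF c assms] by blast
  then show "xs k = ereal (yv k)" "yv k > 0" by (auto simp: yv_def)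
qed

definition A :: "int \<Rightarrow> ennreal" where
  "A k = (\<integral>\<^sup>+ s\<in>Iset xs k. epow (Ain h (xs (k+1)) s) q * ennreal (w s) \<partial>lborel)"
definition W :: "int \<Rightarrow> ennreal" where
  "W k = (\<integral>\<^sup>+ s\<in>Iset xs k. ennreal (w s) \<partial>lborel)"
definition B :: "int \<Rightarrow> ennreal" where
  "B k = W k * epow (Hx h (xs (k+1))) q"
definition L :: ennreal where
  "L = (\<integral>\<^sup>+ x\<in>{0<..}. epow (Ff q w h x) (r/q) * ennreal (u x) \<partial>lborel)"
definition Ds :: ennreal where
  "Ds = (\<integral>\<^sup>+ k. ennreal (2 powr real_of_int k) * epow (Ff q w h (yv k)) (r/q) \<partial>count_space Z)"
definition D1 :: ennreal where
  "D1 = (\<integral>\<^sup>+ k. ennreal (2 powr real_of_int k) * epow (A k) (r/q) \<partial>count_space Z)"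
definition D2 :: ennreal where
  "D2 = (\<integral>\<^sup>+ k. ennreal (2 powr real_of_int k) * epow (B k) (r/q) \<partial>count_space Z)"

lemma lhs_eq: "lhs42 q r u w h = epow L (1/r)"
  unfolding lhs42_def L_def Ff_def Gf_def Hh_def by (rule refl)

lemma A_alt: "A k = (\<integral>\<^sup>+ s\<in>{s. xs k < ereal s \<and> ereal s < xs (k + 1)}.
           epow (\<integral>\<^sup>+ t\<in>{t. s < t \<and> ereal t < xs (k + 1)}. ennreal (h t) \<partial>lborel) q
             * ennreal (w s) \<partial>lborel)"
  unfolding A_def Iset_def Ain_def by (rule refl)

lemma W_alt: "W k = (\<integral>\<^sup>+ s\<in>{s. xs k < ereal s \<and> ereal s < xs (k + 1)}. ennreal (w s) \<partial>lborel)"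
  unfolding W_def Iset_def by (rule refl)

lemma Hx_alt: "Hx h (xs (k+1)) = (\<integral>\<^sup>+ t\<in>{t. xs (k + 1) < ereal t}. ennreal (h t) \<partial>lborel)"
  unfolding Hx_def by (rule refl)

lemma disc1_eq: "disc1 q r Z xs w h = epow D1 (1/r)"
  unfolding disc1_def D1_def
proof (intro arg_cong[where f="\<lambda>x. epow x (1/r)"] nn_integral_cong)
  fix k :: int
  have "epow (ennreal (2 powr (real_of_int k / r)) * epow (A k) (1/q)) r
      = ennreal (2 powr (real_of_int k / r * r)) * epow (epow (A k) (1/q)) r"
    by (rule epow_cmult_2powr[OF r])
  also have "\<dots> = ennreal (2 powr real_of_int k) * epow (A k) (r/q)"
    using q r by (simp add: epow_epow)
  finally show "epow (ennreal (2 powr (real_of_int k / r)) *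
        epow (\<integral>\<^sup>+ s\<in>{s. xs k < ereal s \<and> ereal s < xs (k + 1)}.
           epow (\<integral>\<^sup>+ t\<in>{t. s < t \<and> ereal t < xs (k + 1)}. ennreal (h t) \<partial>lborel) q
             * ennreal (w s) \<partial>lborel) (1 / q)) r = ennreal (2 powr real_of_int k) * epow (A k) (r/q)"
    by (simp only: A_alt)
qed

lemma disc2_eq: "disc2 q r Z xs w h = epow D2 (1/r)"
  unfolding disc2_def D2_def
proof (intro arg_cong[where f="\<lambda>x. epow x (1/r)"] nn_integral_cong)
  fix k :: int
  have "epow (ennreal (2 powr (real_of_int k / r)) * epow (W k) (1/q) * Hx h (xs (k+1))) r
      = ennreal (2 powr (real_of_int k / r * r)) * (epow (epow (W k) (1/q)) r * epow (Hx h (xs (k+1))) r)"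
    by (simp only: mult.assoc epow_mult[OF r] epow_2powr)
  also have "\<dots> = ennreal (2 powr real_of_int k) * epow (B k) (r/q)"
    using q r by (simp add: epow_epow B_def epow_mult)
  finally show "epow (ennreal (2 powr (real_of_int k / r)) *
        epow (\<integral>\<^sup>+ s\<in>{s. xs k < ereal s \<and> ereal s < xs (k + 1)}. ennreal (w s) \<partial>lborel) (1 / q) *
        (\<integral>\<^sup>+ t\<in>{t. xs (k + 1) < ereal t}. ennreal (h t) \<partial>lborel)) r
      = ennreal (2 powr real_of_int k) * epow (B k) (r/q)"
    by (simp only: W_alt Hx_alt)
qed


lemma Ff_meas'[measurable]: "Ff q w h \<in> borel_measurable borel" by measurable

lemma U1: "L = (\<integral>\<^sup>+ k. (\<integral>\<^sup>+ x\<in>Jset xs k. epow (Ff q w h x) (r/q) * ennreal (u x) \<partial>lborel) \<partial>count_space Z)"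
  unfolding L_def by (rule int_over_J[OF c wu, symmetric]) measurable

lemma U2: assumes k: "k \<in> Z"
  shows "(\<integral>\<^sup>+ x\<in>Jset xs k. epow (Ff q w h x) (r/q) * ennreal (u x) \<partial>lborel)
     \<le> ennreal (2 powr real_of_int k) * epow (Ff q w h (yv k)) (r/q)"
proof -
  have "(\<integral>\<^sup>+ x\<in>Jset xs k. epow (Ff q w h x) (r/q) * ennreal (u x) \<partial>lborel)
      \<le> (\<integral>\<^sup>+ x\<in>Jset xs k. epow (Ff q w h (yv k)) (r/q) * ennreal (u x) \<partial>lborel)"
  proof (rule set_int_mono)
    fix x assume "x \<in> Jset xs k"
    then have "yv k \<le> x" using yv[OF k] by (auto simp: Jset_def)
    then show "epow (Ff q w h x) (r/q) * ennreal (u x) \<le> epow (Ff q w h (yv k)) (r/q) * ennreal (u x)"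
      by (intro mult_right_mono epow_mono P Ff_anti) auto
  qed
  also have "\<dots> = epow (Ff q w h (yv k)) (r/q) * (\<integral>\<^sup>+ x\<in>Jset xs k. ennreal (u x) \<partial>lborel)"
    by (rule set_int_cmult) measurable
  also have "\<dots> \<le> epow (Ff q w h (yv k)) (r/q) * ennreal (2 powr real_of_int k)"
    by (rule mult_left_mono[OF J_u(1)[OF c wu k]]) simp
  finally show ?thesis by (simp add: mult.commute)
qed

lemma L_le_Ds: "L \<le> Ds"
  unfolding U1 Ds_def by (rule nn_integral_mono) (simp add: U2)

lemma U4: assumes j: "j \<in> Z"
  shows "(\<integral>\<^sup>+ t\<in>Jset xs j. Gf q w h t \<partial>lborel) \<le> ennreal (2 powr q) * (A j + B j)"
proof -
  define X where "X = xs (j+1)"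
  have "(\<integral>\<^sup>+ t\<in>Jset xs j. Gf q w h t \<partial>lborel)
      \<le> (\<integral>\<^sup>+ t\<in>Jset xs j. ennreal (2 powr q) * (epow (Ain h X t) q * ennreal (w t) + epow (Hx h X) q * ennreal (w t)) \<partial>lborel)"
  proof (rule set_int_mono)
    fix t assume "t \<in> Jset xs j"
    then have "ereal t \<le> X" by (simp add: Jset_def X_def)
    then have "Hh h t \<le> Ain h X t + Hx h X" by (rule Hh_split[OF _ hm])
    then have "epow (Hh h t) q \<le> epow (Ain h X t + Hx h X) q" by (rule epow_mono[OF q])
    also have "\<dots> \<le> ennreal (2 powr q) * (epow (Ain h X t) q + epow (Hx h X) q)" by (rule epow_add_le[OF q])
    finally have "epow (Hh h t) q * ennreal (w t) \<le> ennreal (2 powr q) * (epow (Ain h X t) q + epow (Hx h X) q) * ennreal (w t)"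
      by (rule mult_right_mono) simp
    then show "Gf q w h t \<le> ennreal (2 powr q) * (epow (Ain h X t) q * ennreal (w t) + epow (Hx h X) q * ennreal (w t))"
      by (simp add: Gf_def distrib_right mult.assoc)
  qed
  also have "\<dots> = ennreal (2 powr q) * ((\<integral>\<^sup>+ t\<in>Jset xs j. epow (Ain h X t) q * ennreal (w t) \<partial>lborel) + (\<integral>\<^sup>+ t\<in>Jset xs j. epow (Hx h X) q * ennreal (w t) \<partial>lborel))"
  proof -
    have e1: "(\<integral>\<^sup>+ t\<in>Jset xs j. ennreal (2 powr q) * (epow (Ain h X t) q * ennreal (w t) + epow (Hx h X) q * ennreal (w t)) \<partial>lborel)
      = ennreal (2 powr q) * (\<integral>\<^sup>+ t\<in>Jset xs j. (epow (Ain h X t) q * ennreal (w t) + epow (Hx h X) q * ennreal (w t)) \<partial>lborel)"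
      by (rule set_int_cmult) measurable
    have e2: "(\<integral>\<^sup>+ t\<in>Jset xs j. (epow (Ain h X t) q * ennreal (w t) + epow (Hx h X) q * ennreal (w t)) \<partial>lborel)
      = (\<integral>\<^sup>+ t\<in>Jset xs j. epow (Ain h X t) q * ennreal (w t) \<partial>lborel) + (\<integral>\<^sup>+ t\<in>Jset xs j. epow (Hx h X) q * ennreal (w t) \<partial>lborel)"
      by (rule set_int_add) measurable
    show ?thesis using e1 e2 by simp
  qed
  also have "(\<integral>\<^sup>+ t\<in>Jset xs j. epow (Ain h X t) q * ennreal (w t) \<partial>lborel) = A j"
    unfolding JI_int A_def X_def ..
  also have "(\<integral>\<^sup>+ t\<in>Jset xs j. epow (Hx h X) q * ennreal (w t) \<partial>lborel) = epow (Hx h X) q * W j"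
    unfolding JI_int W_def by (rule set_int_cmult) measurable
  also have "epow (Hx h X) q * W j = B j" by (simp add: B_def X_def mult.commute)
  finally show ?thesis .
qed

lemma U3: assumes k: "k \<in> Z"
  shows "Ff q w h (yv k) \<le> ennreal (2 powr q) * (\<integral>\<^sup>+ j. (A j + B j) * indicator {k..} j \<partial>count_space Z)"
proof -
  have "Ff q w h (yv k) = (\<integral>\<^sup>+ j. (\<integral>\<^sup>+ t\<in>Jset xs j. Gf q w h t \<partial>lborel) * indicator {k..} j \<partial>count_space Z)"
    unfolding Ff_def by (rule int_over_J_ge[OF c wu _ k yv(1)[OF k], symmetric]) measurable
  also have "\<dots> \<le> (\<integral>\<^sup>+ j. ennreal (2 powr q) * ((A j + B j) * indicator {k..} j) \<partial>count_space Z)"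
    by (rule nn_integral_mono) (auto simp: mult.assoc[symmetric] intro!: mult_right_mono U4)
  also have "\<dots> = ennreal (2 powr q) * (\<integral>\<^sup>+ j. (A j + B j) * indicator {k..} j \<partial>count_space Z)"
    by (rule nn_integral_cmult) simp
  finally show ?thesis .
qed

lemma cs_mult_add: "(\<integral>\<^sup>+ k. f k * (g k + h' k) \<partial>count_space Z) = (\<integral>\<^sup>+ k. f k * g k \<partial>count_space Z) + (\<integral>\<^sup>+ k. f k * h' k \<partial>count_space Z)"
  by (simp add: distrib_left nn_integral_add)

definition K1 :: real where "K1 = 2 powr (q * (r/q)) * Chardy (r/q) * 2 powr (r/q)"

lemma K1_pos: "K1 > 0" unfolding K1_def using Chardy_pos[OF P] by simp

lemma Ds_le: "Ds \<le> ennreal K1 * (D1 + D2)"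
proof -
  define S where "S k = (\<integral>\<^sup>+ j. (A j + B j) * indicator {k..} j \<partial>count_space Z)" for k
  have "Ds \<le> (\<integral>\<^sup>+ k. ennreal (2 powr (q * (r/q))) * (ennreal (2 powr real_of_int k) * epow (S k) (r/q)) \<partial>count_space Z)"
    unfolding Ds_def
  proof (rule nn_integral_mono)
    fix k assume "k \<in> space (count_space Z)"
    then have k: "k \<in> Z" by simp
    have "epow (Ff q w h (yv k)) (r/q) \<le> epow (ennreal (2 powr q) * S k) (r/q)"
      by (rule epow_mono[OF P]) (use U3[OF k] in \<open>simp add: S_def\<close>)
    also have "\<dots> = ennreal (2 powr (q * (r/q))) * epow (S k) (r/q)"
      by (rule epow_cmult_2powr[OF P])
    finally show "ennreal (2 powr real_of_int k) * epow (Ff q w h (yv k)) (r/q)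
        \<le> ennreal (2 powr (q * (r/q))) * (ennreal (2 powr real_of_int k) * epow (S k) (r/q))"
      by (metis (no_types, lifting) mult.left_commute mult_left_mono zero_le)
  qed
  also have "\<dots> = ennreal (2 powr (q * (r/q))) * (\<integral>\<^sup>+ k. ennreal (2 powr real_of_int k) * epow (S k) (r/q) \<partial>count_space Z)"
    by (rule nn_integral_cmult) simp
  also have "(\<integral>\<^sup>+ k. ennreal (2 powr real_of_int k) * epow (S k) (r/q) \<partial>count_space Z)
      \<le> ennreal (Chardy (r/q)) * (\<integral>\<^sup>+ k. ennreal (2 powr real_of_int k) * epow (A k + B k) (r/q) \<partial>count_space Z)"
    unfolding S_def by (rule hardy[OF P])
  also have "(\<integral>\<^sup>+ k. ennreal (2 powr real_of_int k) * epow (A k + B k) (r/q) \<partial>count_space Z)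
      \<le> (\<integral>\<^sup>+ k. ennreal (2 powr (r/q)) * (ennreal (2 powr real_of_int k) * (epow (A k) (r/q) + epow (B k) (r/q))) \<partial>count_space Z)"
    by (rule nn_integral_mono)
       (metis (no_types, lifting) epow_add_le[OF P] mult.left_commute mult_left_mono zero_le)
  also have "\<dots> = ennreal (2 powr (r/q)) * (D1 + D2)"
    unfolding D1_def D2_def by (subst nn_integral_cmult) (simp_all add: cs_mult_add)
  finally have "Ds \<le> ennreal (2 powr (q * (r/q))) * (ennreal (Chardy (r/q)) * (ennreal (2 powr (r/q)) * (D1 + D2)))"
    by (simp add: mult_left_mono)
  also have "\<dots> = ennreal K1 * (D1 + D2)"
    using Chardy_pos[OF P] by (simp add: K1_def ennreal_mult mult.assoc)
  finally show ?thesis .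
qed

lemma set_int_subset: "A' \<subseteq> B' \<Longrightarrow> (\<integral>\<^sup>+ x\<in>A'. f x \<partial>M) \<le> (\<integral>\<^sup>+ x\<in>B'. f x \<partial>M)"
  by (intro nn_integral_mono) (auto simp: indicator_def)

lemma I_sub: assumes k: "k \<in> Z" shows "Iset xs k \<subseteq> {yv k<..}"
  using yv[OF k] by (auto simp: Iset_def)

lemma L1: assumes k: "k \<in> Z" shows "A k \<le> Ff q w h (yv k)" "B k \<le> Ff q w h (yv k)"
proof -
  have "A k \<le> (\<integral>\<^sup>+ s\<in>Iset xs k. Gf q w h s \<partial>lborel)"
    unfolding A_def
  proof (rule set_int_mono)
    fix s assume "s \<in> Iset xs k"
    have "Ain h (xs (k+1)) s \<le> Hh h s"
      unfolding Ain_def Hh_def by (rule set_int_subset) auto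
    then show "epow (Ain h (xs (k+1)) s) q * ennreal (w s) \<le> Gf q w h s"
      unfolding Gf_def by (intro mult_right_mono epow_mono q) auto
  qed
  also have "\<dots> \<le> Ff q w h (yv k)" unfolding Ff_def by (rule set_int_subset[OF I_sub[OF k]])
  finally show "A k \<le> Ff q w h (yv k)" .
  have "B k = (\<integral>\<^sup>+ s\<in>Iset xs k. epow (Hx h (xs (k+1))) q * ennreal (w s) \<partial>lborel)"
    unfolding B_def W_def by (subst set_int_cmult) (simp_all add: mult.commute)
  also have "\<dots> \<le> (\<integral>\<^sup>+ s\<in>Iset xs k. Gf q w h s \<partial>lborel)"
  proof (rule set_int_mono)
    fix s assume s: "s \<in> Iset xs k"
    have "Hx h (xs (k+1)) \<le> Hh h s"
      unfolding Hx_def Hh_def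
    proof (rule set_int_subset, rule subsetI)
      fix t assume "t \<in> {t. xs (k+1) < ereal t}"
      then have "ereal s < ereal t" using s unfolding Iset_def by (auto dest: order.strict_trans)
      then show "t \<in> {s<..}" by simp
    qed
    then show "epow (Hx h (xs (k+1))) q * ennreal (w s) \<le> Gf q w h s"
      unfolding Gf_def by (intro mult_right_mono epow_mono q) auto
  qed
  also have "\<dots> \<le> Ff q w h (yv k)" unfolding Ff_def by (rule set_int_subset[OF I_sub[OF k]])
  finally show "B k \<le> Ff q w h (yv k)" .
qed

lemma epow2: "epow 2 p = ennreal (2 powr p)"
  using epow_ennreal[of 2 p] by simp

lemma D12_le: "D1 + D2 \<le> ennreal (2 * 2 powr (r/q)) * Ds"
proof -
  have "D1 + D2 = (\<integral>\<^sup>+ k. ennreal (2 powr real_of_int k) * (epow (A k) (r/q) + epow (B k) (r/q)) \<partial>count_space Z)"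
    unfolding D1_def D2_def by (simp add: cs_mult_add)
  also have "\<dots> \<le> (\<integral>\<^sup>+ k. ennreal (2 * 2 powr (r/q)) * (ennreal (2 powr real_of_int k) * epow (Ff q w h (yv k)) (r/q)) \<partial>count_space Z)"
  proof (rule nn_integral_mono)
    fix k assume "k \<in> space (count_space Z)"
    then have k: "k \<in> Z" by simp
    have "epow (A k) (r/q) + epow (B k) (r/q) \<le> 2 * epow (A k + B k) (r/q)" by (rule epow_add_ge[OF P])
    also have "epow (A k + B k) (r/q) \<le> epow (2 * Ff q w h (yv k)) (r/q)"
      by (rule epow_mono[OF P]) (metis L1[OF k] add_mono mult_2)
    also have "epow (2 * Ff q w h (yv k)) (r/q) = ennreal (2 powr (r/q)) * epow (Ff q w h (yv k)) (r/q)"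
      by (simp add: epow_mult[OF P] epow2)
    finally have "epow (A k) (r/q) + epow (B k) (r/q) \<le> ennreal (2 * 2 powr (r/q)) * epow (Ff q w h (yv k)) (r/q)"
      by (simp add: mult_left_mono ennreal_mult mult.assoc)
    then show "ennreal (2 powr real_of_int k) * (epow (A k) (r/q) + epow (B k) (r/q))
        \<le> ennreal (2 * 2 powr (r/q)) * (ennreal (2 powr real_of_int k) * epow (Ff q w h (yv k)) (r/q))"
      by (metis (no_types, lifting) mult.left_commute mult_left_mono zero_le)
  qed
  also have "\<dots> = ennreal (2 * 2 powr (r/q)) * Ds"
    unfolding Ds_def by (rule nn_integral_cmult) simp
  finally show ?thesis .
qed

lemma cs_subset: "A' \<subseteq> B' \<Longrightarrow> (\<integral>\<^sup>+ x. f x \<partial>count_space A') \<le> (\<integral>\<^sup>+ x. f x \<partial>count_space B')"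
proof -
  assume sub: "A' \<subseteq> B'"
  have "(\<integral>\<^sup>+ x. f x \<partial>count_space A') = (\<integral>\<^sup>+ x. f x * indicator A' x \<partial>count_space A')"
    by (rule nn_integral_cong) simp
  also have "\<dots> = (\<integral>\<^sup>+ x. f x * indicator A' x \<partial>count_space B')"
    by (rule nn_integral_count_space_eq) (use sub in auto)
  also have "\<dots> \<le> (\<integral>\<^sup>+ x. f x \<partial>count_space B')"
    by (rule nn_integral_mono) (simp add: indicator_def)
  finally show ?thesis .
qed

lemma Ds_le_L: "Ds \<le> 2 * L"
proof -
  define g where "g j = (\<integral>\<^sup>+ x\<in>Jset xs j. epow (Ff q w h x) (r/q) * ennreal (u x) \<partial>lborel)" for j
  have down: "k - 1 \<in> Z" if "k \<in> Z" for k using c that unfolding cov_def by auto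
  have "Ds \<le> (\<integral>\<^sup>+ k. 2 * g (k - 1) \<partial>count_space Z)"
    unfolding Ds_def
  proof (rule nn_integral_mono)
    fix k assume "k \<in> space (count_space Z)"
    then have k: "k \<in> Z" by simp
    have k1: "k - 1 \<in> Z" by (rule down[OF k])
    have "ennreal (2 powr real_of_int (k-1)) * epow (Ff q w h (yv k)) (r/q)
        = (\<integral>\<^sup>+ x\<in>Jset xs (k-1). ennreal (u x) \<partial>lborel) * epow (Ff q w h (yv k)) (r/q)"
      using J_u(2)[OF c wu k1] k by simp
    also have "\<dots> = (\<integral>\<^sup>+ x\<in>Jset xs (k-1). epow (Ff q w h (yv k)) (r/q) * ennreal (u x) \<partial>lborel)"
      by (subst set_int_cmult) (simp_all add: mult.commute)
    also have "\<dots> \<le> g (k-1)"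
      unfolding g_def
    proof (rule set_int_mono)
      fix x assume "x \<in> Jset xs (k-1)"
      then have "ereal x \<le> xs k" by (simp add: Jset_def)
      then have "x \<le> yv k" using yv(1)[OF k] by simp
      then show "epow (Ff q w h (yv k)) (r/q) * ennreal (u x) \<le> epow (Ff q w h x) (r/q) * ennreal (u x)"
        by (intro mult_right_mono epow_mono P Ff_anti) auto
    qed
    finally have *: "ennreal (2 powr real_of_int (k-1)) * epow (Ff q w h (yv k)) (r/q) \<le> g (k-1)" .
    have "ennreal (2 powr real_of_int k) = 2 * ennreal (2 powr real_of_int (k-1))"
    proof -
      have "2 powr real_of_int k = 2 * 2 powr real_of_int (k-1)"
        by (simp add: powr_diff)
      then show ?thesis by (simp add: ennreal_mult)
    qed
    then show "ennreal (2 powr real_of_int k) * epow (Ff q w h (yv k)) (r/q) \<le> 2 * g (k-1)"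
      using * by (metis (no_types, lifting) mult.assoc mult_left_mono zero_le)
  qed
  also have "\<dots> = 2 * (\<integral>\<^sup>+ k. g (k - 1) \<partial>count_space Z)"
    by (rule nn_integral_cmult) simp
  also have "(\<integral>\<^sup>+ k. g (k - 1) \<partial>count_space Z) = (\<integral>\<^sup>+ j. g j \<partial>count_space ((\<lambda>k. k - 1) ` Z))"
    by (rule nn_integral_bij_count_space) (auto simp: bij_betw_def inj_on_def)
  also have "\<dots> \<le> (\<integral>\<^sup>+ j. g j \<partial>count_space Z)"
    by (rule cs_subset) (use down in auto)
  also have "\<dots> = L" unfolding U1 g_def ..
  finally show ?thesis by (simp add: mult_left_mono)
qed


lemma epow_cmult: "K \<ge> 0 \<Longrightarrow> p > 0 \<Longrightarrow> epow (ennreal K * x) p = ennreal (K powr p) * epow x p"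
  by (simp add: epow_mult epow_ennreal)

lemma upper: "lhs42 q r u w h \<le> ennreal (K1 powr (1/r) * 2 powr (1/r)) * (disc1 q r Z xs w h + disc2 q r Z xs w h)"
proof -
  have r1: "1/r > 0" using r by simp
  have "lhs42 q r u w h = epow L (1/r)" by (rule lhs_eq)
  also have "\<dots> \<le> epow (ennreal K1 * (D1 + D2)) (1/r)"
    by (rule epow_mono[OF r1]) (rule order.trans[OF L_le_Ds Ds_le])
  also have "\<dots> = ennreal (K1 powr (1/r)) * epow (D1 + D2) (1/r)"
    using K1_pos r1 by (simp add: epow_cmult)
  also have "\<dots> \<le> ennreal (K1 powr (1/r)) * (ennreal (2 powr (1/r)) * (epow D1 (1/r) + epow D2 (1/r)))"
    by (rule mult_left_mono[OF epow_add_le[OF r1]]) simp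
  also have "\<dots> = ennreal (K1 powr (1/r) * 2 powr (1/r)) * (disc1 q r Z xs w h + disc2 q r Z xs w h)"
    by (simp add: disc1_eq disc2_eq ennreal_mult mult.assoc)
  finally show ?thesis .
qed

lemma lower: "disc1 q r Z xs w h + disc2 q r Z xs w h \<le> ennreal (2 * (2 * 2 powr (r/q) * 2) powr (1/r)) * lhs42 q r u w h"
proof -
  have r1: "1/r > 0" using r by simp
  have K: "2 * 2 powr (r/q) * 2 \<ge> (0::real)" by simp
  have "D1 + D2 \<le> ennreal (2 * 2 powr (r/q)) * (2 * L)"
    by (rule order.trans[OF D12_le mult_left_mono[OF Ds_le_L]]) simp
  also have "\<dots> = ennreal (2 * 2 powr (r/q) * 2) * L"
    by (subst ennreal_mult''[of 2]) (simp_all add: mult.assoc)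
  finally have DL: "D1 + D2 \<le> ennreal (2 * 2 powr (r/q) * 2) * L" .
  have "disc1 q r Z xs w h + disc2 q r Z xs w h = epow D1 (1/r) + epow D2 (1/r)"
    by (simp add: disc1_eq disc2_eq)
  also have "\<dots> \<le> 2 * epow (D1 + D2) (1/r)" by (rule epow_add_ge[OF r1])
  also have "\<dots> \<le> 2 * epow (ennreal (2 * 2 powr (r/q) * 2) * L) (1/r)"
    by (rule mult_left_mono[OF epow_mono[OF r1 DL]]) simp
  also have "\<dots> = 2 * (ennreal ((2 * 2 powr (r/q) * 2) powr (1/r)) * lhs42 q r u w h)"
    using K r1 by (simp add: epow_cmult lhs_eq)
  also have "\<dots> = ennreal (2 * (2 * 2 powr (r/q) * 2) powr (1/r)) * lhs42 q r u w h"
    by (simp add: ennreal_mult mult.assoc)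
  finally show ?thesis .
qed

end
theorem lemma4p2:
  fixes q r :: real
  assumes "0 < q" and "0 < r"
  shows "\<exists>C>0. \<forall>u v w h Z xs.
            is_weight u \<longrightarrow> is_weight v \<longrightarrow> is_weight w \<longrightarrow> nonneg_meas h \<longrightarrow>
            covering_seq u Z xs \<longrightarrow>
            lhs42 q r u w h \<le> ennreal C * (disc1 q r Z xs w h + disc2 q r Z xs w h) \<and>
            disc1 q r Z xs w h + disc2 q r Z xs w h \<le> ennreal C * lhs42 q r u w h"
proof -
  define K where "K = 2 powr (q * (r/q)) * Chardy (r/q) * 2 powr (r/q)"
  define C1 where "C1 = K powr (1/r) * 2 powr (1/r)"
  define C2 where "C2 = 2 * (2 * 2 powr (r/q) * 2) powr (1/r)"
  define C where "C = max C1 C2"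
  have Kpos: "K > 0" unfolding K_def using Chardy_pos[of "r/q"] assms by simp
  have C1pos: "C1 > 0" unfolding C1_def using Kpos by simp
  have C: "C > 0" "C1 \<le> C" "C2 \<le> C" using C1pos by (auto simp: C_def)
  show ?thesis
  proof (intro exI[of _ C] conjI allI impI)
    show "C > 0" by (rule C(1))
    fix u v w h Z xs
    assume wu: "is_weight u" and wv: "is_weight v" and ww: "is_weight w" and hh: "nonneg_meas h"
      and cs: "covering_seq u Z xs"
    interpret L42 q r u w h Z xs
      using assms wu ww hh covering_cov[OF cs] by unfold_locales auto
    have KK: "K1 = K" by (simp add: K1_def K_def)
    have "lhs42 q r u w h \<le> ennreal C1 * (disc1 q r Z xs w h + disc2 q r Z xs w h)"
      using upper by (simp add: KK C1_def)
    also have "\<dots> \<le> ennreal C * (disc1 q r Z xs w h + disc2 q r Z xs w h)"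
      by (rule mult_right_mono) (use C in \<open>auto intro: ennreal_leI\<close>)
    finally show "lhs42 q r u w h \<le> ennreal C * (disc1 q r Z xs w h + disc2 q r Z xs w h)" .
    have "disc1 q r Z xs w h + disc2 q r Z xs w h \<le> ennreal C2 * lhs42 q r u w h"
      using lower by (simp add: C2_def)
    also have "\<dots> \<le> ennreal C * lhs42 q r u w h"
      by (rule mult_right_mono) (use C in \<open>auto intro: ennreal_leI\<close>)
    finally show "disc1 q r Z xs w h + disc2 q r Z xs w h \<le> ennreal C * lhs42 q r u w h" .
  qed
qed


end
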